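(* Let $\alpha,\beta,\gamma,\delta,\varepsilon\in\mathbb{C}$ with $\gamma+\delta=2$, $1+\alpha+\beta=\gamma+\delta+\varepsilon$, $\alpha\beta\neq0$, $\gamma+\varepsilon\notin\{0,-1,-2,\dots\}$, $\operatorname{Re}\gamma>1$, and assume $(\gamma+\alpha)/2$ and $(\gamma+\beta)/2$ are not in $\{0,-1,-2,\dots\}$. Let $$a_k=\frac{(\varepsilon/2)_k\,((\gamma+\varepsilon-\alpha)/2)_k\,((\gamma+\varepsilon-\beta)/2)_k}{k!\,((\gamma+\varepsilon)/2)_k\,((1+\gamma+\varepsilon)/2)_k}.$$ Then the series $u(1):=\sum_{k=0}^\infty a_k\,{}_2F_1(\alpha,\beta;\gamma+\varepsilon+2k;1)$ converges and $$u(1)=\frac{\Gamma(\gamma+\varepsilon)\Gamma(\gamma-1)}{\Gamma(\gamma+\varepsilon-\alpha)\Gamma(\gamma-1+\alpha)}\;{}_3F_2\Big(\tfrac{\gamma-1}{2},\tfrac{\gamma}{2},\tfrac{\varepsilon}{2};\tfrac{\gamma+\alpha}{2},\tfrac{\gamma+\beta}{2};1\Big).$$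
   Context: $(x)_k$ is the Pochhammer symbol; ${}_2F_1(\alpha,\beta;c;1)$ is the value of the Gauss hypergeometric series at $z=1$ (convergent when $\operatorname{Re}(c-\alpha-\beta)>0$); ${}_3F_2(a_1,a_2,a_3;b_1,b_2;x)=\sum_{k\ge0}\frac{(a_1)_k(a_2)_k(a_3)_k}{(b_1)_k(b_2)_k k!}x^k$ is Clausen's series; $1/\Gamma$ at a pole is interpreted as $0$. (The function $\sum_k a_k\,{}_2F_1(\alpha,\beta;\gamma+\varepsilon+2k;z)$ is a solution of the general Heun equation with $a=1/2$ and $q=\alpha\beta/2+(1-\delta)\varepsilon/2$.) *)

theory Defs
  imports "HOL-Analysis.Analysis"
begin

definition hyp2F1_term :: "complex \<Rightarrow> complex \<Rightarrow> complex \<Rightarrow> nat \<Rightarrow> complex" where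
  "hyp2F1_term a b c n = pochhammer a n * pochhammer b n / (pochhammer c n * fact n)"

definition hyp2F1_at1 :: "complex \<Rightarrow> complex \<Rightarrow> complex \<Rightarrow> complex" where
  "hyp2F1_at1 a b c = (\<Sum>n. hyp2F1_term a b c n)"

definition hyp3F2_term :: "complex \<Rightarrow> complex \<Rightarrow> complex \<Rightarrow> complex \<Rightarrow> complex \<Rightarrow> complex \<Rightarrow> nat \<Rightarrow> complex" where
  "hyp3F2_term a1 a2 a3 b1 b2 x k =
     pochhammer a1 k * pochhammer a2 k * pochhammer a3 k / (pochhammer b1 k * pochhammer b2 k * fact k) * x ^ k"

definition hyp3F2 :: "complex \<Rightarrow> complex \<Rightarrow> complex \<Rightarrow> complex \<Rightarrow> complex \<Rightarrow> complex \<Rightarrow> complex" where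
  "hyp3F2 a1 a2 a3 b1 b2 x = (\<Sum>k. hyp3F2_term a1 a2 a3 b1 b2 x k)"

end

theory Submission imports Defs begin

lemma poch_ratio_bound:
  fixes a b :: complex
  assumes b: "b \<notin> \<int>\<^sub>\<le>\<^sub>0"
  shows "\<exists>C. eventually (\<lambda>n. norm (pochhammer a (Suc n) / pochhammer b (Suc n)) \<le> C * real n powr (Re a - Re b)) sequentially"
proof -
  have "convergent (rGamma_series a)" using rGamma_series_LIMSEQ convergentI by blast
  then have "Bseq (rGamma_series a)" using convergent_imp_Bseq by blast
  then obtain M where M: "M > 0" "\<And>n. norm (rGamma_series a n) \<le> M" by (auto simp: Bseq_def)
  have rb: "rGamma b \<noteq> 0" using b by (simp add: rGamma_eq_zero_iff)
  have "(\<lambda>n. norm (rGamma_series b n)) \<longlonglongrightarrow> norm (rGamma b)"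
    by (intro tendsto_intros rGamma_series_LIMSEQ)
  moreover have "norm (rGamma b) / 2 < norm (rGamma b)" using rb by simp
  ultimately have ev: "eventually (\<lambda>n. norm (rGamma_series b n) > norm (rGamma b) / 2) sequentially"
    by (rule order_tendstoD)
  show ?thesis
  proof (rule exI[of _ "M / (norm (rGamma b) / 2)"])
    show "eventually (\<lambda>n. norm (pochhammer a (Suc n) / pochhammer b (Suc n)) \<le> M / (norm (rGamma b) / 2) * real n powr (Re a - Re b)) sequentially"
      using ev eventually_gt_at_top[of 0]
    proof eventually_elim
      case (elim n)
      define E :: "complex \<Rightarrow> complex" where "E z = exp (z * of_real (ln (of_nat n)))" for z
      have pa: "pochhammer a (Suc n) = rGamma_series a n * (fact n * E a)"
        by (simp add: rGamma_series_def E_def)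
      have pb: "pochhammer b (Suc n) = rGamma_series b n * (fact n * E b)"
        by (simp add: rGamma_series_def E_def)
      have Ediv: "E a / E b = E (a - b)" by (simp add: E_def exp_diff[symmetric] algebra_simps)
      have nE: "norm (E (a - b)) = real n powr (Re a - Re b)"
        using elim by (simp add: E_def powr_def)
      have "pochhammer a (Suc n) / pochhammer b (Suc n) = rGamma_series a n / rGamma_series b n * (E a / E b)"
        unfolding pa pb by (simp add: E_def)
      hence "norm (pochhammer a (Suc n) / pochhammer b (Suc n)) = norm (rGamma_series a n) / norm (rGamma_series b n) * real n powr (Re a - Re b)"
        by (simp add: Ediv nE norm_divide norm_mult)
      also have "\<dots> \<le> M / (norm (rGamma b) / 2) * real n powr (Re a - Re b)"
        using elim M rb by (intro mult_right_mono frac_le) auto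
      finally show ?case .
    qed
  qed
qed


lemma prod_bound_ev:
  assumes "eventually (\<lambda>n. norm (f n :: complex) \<le> C1 * real n powr p) sequentially"
      and "eventually (\<lambda>n. norm (g n :: complex) \<le> C2 * real n powr q) sequentially"
  shows "eventually (\<lambda>n. norm (f n * g n) \<le> (C1 * C2) * real n powr (p + q)) sequentially"
  using assms eventually_gt_at_top[of 0]
proof eventually_elim
  case (elim n)
  have "norm (f n * g n) = norm (f n) * norm (g n)" by (simp add: norm_mult)
  also have "\<dots> \<le> (C1 * real n powr p) * (C2 * real n powr q)"
  proof (rule mult_mono)
    show "0 \<le> C1 * real n powr p" using elim(1) norm_ge_zero[of "f n"] by linarith
  qed (use elim in auto)
  also have "\<dots> = (C1 * C2) * real n powr (p + q)" by (simp add: powr_add)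
  finally show ?case .
qed

lemma hyp2F1_term_bound:
  assumes c: "c \<notin> \<int>\<^sub>\<le>\<^sub>0"
  shows "\<exists>C. eventually (\<lambda>n. norm (hyp2F1_term a b c (Suc n)) \<le> C * real n powr (Re a + Re b - Re c - 1)) sequentially"
proof -
  obtain C1 where C1: "eventually (\<lambda>n. norm (pochhammer a (Suc n) / pochhammer c (Suc n)) \<le> C1 * real n powr (Re a - Re c)) sequentially"
    using poch_ratio_bound[OF c] by blast
  have one: "(1::complex) \<notin> \<int>\<^sub>\<le>\<^sub>0" by simp
  obtain C2 where C2: "eventually (\<lambda>n. norm (pochhammer b (Suc n) / pochhammer 1 (Suc n)) \<le> C2 * real n powr (Re b - Re 1)) sequentially"
    using poch_ratio_bound[OF one] by blast
  have "eventually (\<lambda>n. norm (pochhammer a (Suc n) / pochhammer c (Suc n) * (pochhammer b (Suc n) / pochhammer 1 (Suc n))) \<le> (C1 * C2) * real n powr ((Re a - Re c) + (Re b - Re 1))) sequentially"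
    by (rule prod_bound_ev[OF C1 C2])
  moreover have "\<And>n. hyp2F1_term a b c (Suc n) = pochhammer a (Suc n) / pochhammer c (Suc n) * (pochhammer b (Suc n) / pochhammer 1 (Suc n))"
    by (simp add: hyp2F1_term_def pochhammer_fact)
  ultimately show ?thesis by (intro exI[of _ "C1 * C2"]) (simp add: algebra_simps)
qed

lemma hyp2F1_summable:
  assumes c: "c \<notin> \<int>\<^sub>\<le>\<^sub>0" and s: "Re (c - a - b) > 0"
  shows "summable (hyp2F1_term a b c)"
proof -
  obtain C where C: "eventually (\<lambda>n. norm (hyp2F1_term a b c (Suc n)) \<le> C * real n powr (Re a + Re b - Re c - 1)) sequentially"
    using hyp2F1_term_bound[OF c] by blast
  have "summable (\<lambda>n. C * real n powr (Re a + Re b - Re c - 1))"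
    using s by (intro summable_mult) (simp add: summable_real_powr_iff)
  hence "summable (\<lambda>n. hyp2F1_term a b c (Suc n))"
    by (rule summable_comparison_test_ev[OF C])
  thus ?thesis by (simp add: summable_Suc_iff)
qed

lemma hyp2F1_n_term_0:
  assumes c: "c \<notin> \<int>\<^sub>\<le>\<^sub>0" and s: "Re (c - a - b) > 0"
  shows "(\<lambda>n. of_nat n * hyp2F1_term a b c n) \<longlonglongrightarrow> 0"
proof -
  obtain C where C: "eventually (\<lambda>n. norm (hyp2F1_term a b c (Suc n)) \<le> C * real n powr (Re a + Re b - Re c - 1)) sequentially"
    using hyp2F1_term_bound[OF c] by blast
  define s' where "s' = Re (c - a - b)"
  have "eventually (\<lambda>n. norm (of_nat (Suc n) * hyp2F1_term a b c (Suc n)) \<le> C * (real n powr (- s') + real n powr (-s' - 1))) sequentially"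
    using C eventually_gt_at_top[of 0]
  proof eventually_elim
    case (elim n)
    have e: "Re a + Re b - Re c - 1 = -s' - 1" by (simp add: s'_def)
    have p: "real n * real n powr (-s' - 1) = real n powr (-s')"
    proof -
      have "real n * real n powr (-s' - 1) = real n powr 1 * real n powr (-s' - 1)"
        using elim by simp
      also have "\<dots> = real n powr (1 + (-s' - 1))" by (rule powr_add[symmetric])
      finally show ?thesis by simp
    qed
    have "norm (of_nat (Suc n) * hyp2F1_term a b c (Suc n)) = (real n + 1) * norm (hyp2F1_term a b c (Suc n))"
    proof -
      have "norm (of_nat (Suc n) :: complex) = real n + 1" by (subst norm_of_nat) simp
      thus ?thesis by (simp only: norm_mult)
    qed
    also have "\<dots> \<le> (real n + 1) * (C * real n powr (Re a + Re b - Re c - 1))"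
      by (rule mult_left_mono[OF elim(1)]) simp
    also have "\<dots> = C * (real n * real n powr (-s' - 1) + real n powr (-s' - 1))"
      unfolding e by (simp only: distrib_left distrib_right mult_1_left mult.assoc mult.left_commute[of "real n" C])
    also have "\<dots> = C * (real n powr (- s') + real n powr (-s' - 1))" by (simp only: p)
    finally show ?case .
  qed
  moreover have "(\<lambda>n. C * (real n powr (- s') + real n powr (-s' - 1))) \<longlonglongrightarrow> C * (0 + 0)"
  proof -
    have s0: "-s' < 0" "-s' - 1 < 0" using s by (auto simp: s'_def)
    show ?thesis
      by (rule tendsto_mult_left, rule tendsto_add)
         (rule tendsto_neg_powr[OF s0(1) filterlim_real_sequentially],
          rule tendsto_neg_powr[OF s0(2) filterlim_real_sequentially])
  qed
  ultimately have "(\<lambda>n. of_nat (Suc n) * hyp2F1_term a b c (Suc n)) \<longlonglongrightarrow> 0"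
    using Lim_null_comparison by fastforce
  thus ?thesis by (rule LIMSEQ_imp_Suc)
qed


lemma nonpos_Ints_shift:
  fixes c :: complex
  assumes "c \<notin> \<int>\<^sub>\<le>\<^sub>0" shows "c + of_nat m \<notin> \<int>\<^sub>\<le>\<^sub>0"
proof
  assume "c + of_nat m \<in> \<int>\<^sub>\<le>\<^sub>0"
  then obtain k where k: "c + of_nat m = - of_nat k" by (elim nonpos_Ints_cases')
  hence "c = - of_nat (k + m)" by (simp add: algebra_simps)
  moreover have "(- of_nat (k + m) :: complex) \<in> \<int>\<^sub>\<le>\<^sub>0" by (rule minus_of_nat_in_nonpos_Ints)
  ultimately show False using assms by simp
qed

lemma contig_alg:
  fixes a b c N P Q R f :: complex
  assumes "c \<noteq> 0" "c + N \<noteq> 0" "R \<noteq> 0" "f \<noteq> 0" "N + 1 \<noteq> 0"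
  shows "c * (c - a - b) * (P * Q / (R * f)) - (c - a) * (c - b) * (P * Q / ((c + N) * R / c * f))
    = - c * (N + 1) * ((a + N) * P * ((b + N) * Q) / ((c + N) * R * ((N + 1) * f))) - (- c * N * (P * Q / (R * f)))"
  using assms by (simp add: divide_simps) algebra

lemma hyp2F1_contig_term:
  fixes a b c :: complex
  assumes c: "c \<notin> \<int>\<^sub>\<le>\<^sub>0"
  shows "c * (c - a - b) * hyp2F1_term a b c n - (c - a) * (c - b) * hyp2F1_term a b (c + 1) n
       = (- c * of_nat (Suc n) * hyp2F1_term a b c (Suc n)) - (- c * of_nat n * hyp2F1_term a b c n)"
proof -
  have c0: "c \<noteq> 0" using c by auto
  have cn: "c + of_nat n \<noteq> 0" using nonpos_Ints_shift[OF c, of n] by auto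
  have R: "pochhammer c n \<noteq> 0" using c by (auto simp: pochhammer_eq_0_iff)
  have f: "(fact n :: complex) \<noteq> 0" by simp
  have n1: "1 + of_nat n \<noteq> (0::complex)"
    by (metis of_nat_Suc of_nat_eq_0_iff nat.distinct(1) add.commute)
  have p1: "pochhammer (c + 1) n = (c + of_nat n) * pochhammer c n / c"
    using pochhammer_rec[of c n] pochhammer_rec'[of c n] c0 by (simp add: field_simps)
  show ?thesis
    unfolding hyp2F1_term_def p1 pochhammer_rec'[of a n] pochhammer_rec'[of b n] pochhammer_rec'[of c n] fact_Suc of_nat_mult of_nat_Suc
    using contig_alg[where N="of_nat n" and P="pochhammer a n" and Q="pochhammer b n" and a=a and b=b and c=c
      and R="pochhammer c n" and f="fact n"] c0 cn R f n1 by (simp add: ac_simps)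
qed

lemma hyp2F1_contig:
  fixes a b c :: complex
  assumes c: "c \<notin> \<int>\<^sub>\<le>\<^sub>0" and s: "Re (c - a - b) > 0"
  shows "c * (c - a - b) * hyp2F1_at1 a b c = (c - a) * (c - b) * hyp2F1_at1 a b (c + 1)"
proof -
  define u where "u = hyp2F1_term a b c"
  define v where "v = hyp2F1_term a b (c + 1)"
  define w where "w n = - c * of_nat n * u n" for n
  have c1: "c + 1 \<notin> \<int>\<^sub>\<le>\<^sub>0" using nonpos_Ints_shift[OF c, of 1] by simp
  have su: "summable u" unfolding u_def by (rule hyp2F1_summable[OF c s])
  have sv: "summable v" unfolding v_def using s by (intro hyp2F1_summable[OF c1]) simp
  have D: "(\<lambda>n. c * (c - a - b) * u n - (c - a) * (c - b) * v n) sums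
      (c * (c - a - b) * suminf u - (c - a) * (c - b) * suminf v)"
    by (intro sums_diff sums_mult summable_sums su sv)
  have "(\<lambda>N. \<Sum>n<N. c * (c - a - b) * u n - (c - a) * (c - b) * v n) = (\<lambda>N. w N - w 0)"
    unfolding u_def v_def w_def hyp2F1_contig_term[OF c] by (rule ext, rule sum_lessThan_telescope)
  moreover have "(\<lambda>N. w N - w 0) \<longlonglongrightarrow> - c * 0 - 0"
  proof -
    have "(\<lambda>N. - c * (of_nat N * u N)) \<longlonglongrightarrow> - c * 0"
      unfolding u_def by (intro tendsto_mult_left hyp2F1_n_term_0[OF c s])
    thus ?thesis by (simp add: w_def mult.assoc)
  qed
  ultimately have "(\<lambda>n. c * (c - a - b) * u n - (c - a) * (c - b) * v n) sums 0"
    unfolding sums_def by simp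
  with D have "c * (c - a - b) * suminf u - (c - a) * (c - b) * suminf v = 0"
    using sums_unique2 by blast
  thus ?thesis unfolding hyp2F1_at1_def u_def v_def by simp
qed


lemma Re_pos_not_nonpos_Int:
  fixes z :: complex assumes "Re z > 0" shows "z \<notin> \<int>\<^sub>\<le>\<^sub>0"
proof
  assume "z \<in> \<int>\<^sub>\<le>\<^sub>0"
  then obtain k where "z = - of_nat k" by (elim nonpos_Ints_cases')
  with assms show False by simp
qed

definition Rfac :: "complex \<Rightarrow> complex \<Rightarrow> complex \<Rightarrow> nat \<Rightarrow> complex" where
  "Rfac a b c m = pochhammer (c - a) m * pochhammer (c - b) m / (pochhammer c m * pochhammer (c - a - b) m)"

lemma hyp2F1_iter:
  fixes a b c :: complex
  assumes c: "c \<notin> \<int>\<^sub>\<le>\<^sub>0" and s: "Re (c - a - b) > 0"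
  shows "hyp2F1_at1 a b c = Rfac a b c m * hyp2F1_at1 a b (c + of_nat m)"
proof (induction m)
  case 0
  then show ?case by (simp add: Rfac_def)
next
  case (Suc m)
  define c' where "c' = c + of_nat m"
  have c': "c' \<notin> \<int>\<^sub>\<le>\<^sub>0" unfolding c'_def by (rule nonpos_Ints_shift[OF c])
  have s': "Re (c' - a - b) > 0" using s by (simp add: c'_def)
  have c'0: "c' \<noteq> 0" using c' by auto
  have s'0: "c' - a - b \<noteq> 0" using s' by auto
  have "c' * (c' - a - b) * hyp2F1_at1 a b c' = (c' - a) * (c' - b) * hyp2F1_at1 a b (c' + 1)"
    by (rule hyp2F1_contig[OF c' s'])
  hence eq: "hyp2F1_at1 a b c' * (c' * (c' - a - b)) = (c' - a) * (c' - b) * hyp2F1_at1 a b (c' + 1)"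
    by (simp only: mult.commute mult.left_commute mult.assoc)
  have X: "c' * (c' - a - b) \<noteq> 0" using c'0 s'0 by simp
  have "hyp2F1_at1 a b c' = (c' - a) * (c' - b) * hyp2F1_at1 a b (c' + 1) / (c' * (c' - a - b))"
    by (subst nonzero_eq_divide_eq[OF X]) (rule eq)
  hence F: "hyp2F1_at1 a b c' = (c' - a) * (c' - b) / (c' * (c' - a - b)) * hyp2F1_at1 a b (c' + 1)"
    by simp
  have R: "Rfac a b c (Suc m) = Rfac a b c m * ((c' - a) * (c' - b) / (c' * (c' - a - b)))"
  proof -
    have e1: "c - a + of_nat m = c' - a" "c - b + of_nat m = c' - b" "c + of_nat m = c'"
      "c - a - b + of_nat m = c' - a - b" by (simp_all add: c'_def algebra_simps)
    have "Rfac a b c (Suc m) = (pochhammer (c - a) m * (c' - a)) * (pochhammer (c - b) m * (c' - b)) /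
       ((pochhammer c m * c') * (pochhammer (c - a - b) m * (c' - a - b)))"
      unfolding Rfac_def pochhammer_rec' e1 by (simp only: ac_simps)
    thus ?thesis unfolding Rfac_def by (simp only: times_divide_times_eq ac_simps)
  qed
  show ?case using Suc.IH unfolding F[unfolded c'_def] R[unfolded c'_def]
    by (simp add: algebra_simps)
qed

lemma pochhammer_rGS:
  "pochhammer (z::complex) (Suc m) = rGamma_series z m * (fact m * exp (z * of_real (ln (of_nat m))))"
  by (simp add: rGamma_series_def)

lemma Rfac_limit:
  fixes a b c :: complex
  assumes c: "c \<notin> \<int>\<^sub>\<le>\<^sub>0" and s: "Re (c - a - b) > 0"
  shows "Rfac a b c \<longlonglongrightarrow> Gamma c * Gamma (c - a - b) * rGamma (c - a) * rGamma (c - b)"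
proof -
  have s0: "c - a - b \<notin> \<int>\<^sub>\<le>\<^sub>0" by (rule Re_pos_not_nonpos_Int[OF s])
  have r1: "rGamma c \<noteq> 0" using c by (simp add: rGamma_eq_zero_iff)
  have r2: "rGamma (c - a - b) \<noteq> 0" using s0 by (simp add: rGamma_eq_zero_iff)
  have eq: "Rfac a b c (Suc m) = rGamma_series (c - a) m * rGamma_series (c - b) m /
             (rGamma_series c m * rGamma_series (c - a - b) m)" for m
  proof -
    define E :: "complex \<Rightarrow> complex" where "E z = fact m * exp (z * of_real (ln (of_nat m)))" for z
    have EE: "E (c - a) * E (c - b) = E c * E (c - a - b)"
      unfolding E_def by (simp add: exp_add[symmetric] algebra_simps)
    have En: "E c * E (c - a - b) \<noteq> 0" by (simp add: E_def)
    have "Rfac a b c (Suc m) = (rGamma_series (c - a) m * rGamma_series (c - b) m) * (E (c - a) * E (c - b)) /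
             ((rGamma_series c m * rGamma_series (c - a - b) m) * (E c * E (c - a - b)))"
      unfolding Rfac_def pochhammer_rGS E_def[symmetric] by (simp add: ac_simps)
    also have "\<dots> = rGamma_series (c - a) m * rGamma_series (c - b) m /
             (rGamma_series c m * rGamma_series (c - a - b) m)"
      unfolding EE using En by simp
    finally show ?thesis .
  qed
  have "(\<lambda>m. Rfac a b c (Suc m)) \<longlonglongrightarrow> rGamma (c - a) * rGamma (c - b) / (rGamma c * rGamma (c - a - b))"
    unfolding eq using r1 r2 by (intro tendsto_intros) auto
  also have "rGamma (c - a) * rGamma (c - b) / (rGamma c * rGamma (c - a - b)) =
       Gamma c * Gamma (c - a - b) * rGamma (c - a) * rGamma (c - b)"
    using r1 r2 by (simp add: rGamma_inverse_Gamma field_simps)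
  finally show ?thesis by (rule LIMSEQ_imp_Suc)
qed


lemma norm_poch_le: "norm (pochhammer (z::complex) n) \<le> pochhammer (norm z) n"
proof (induction n)
  case (Suc n)
  have "norm (pochhammer z (Suc n)) = norm (z + of_nat n) * norm (pochhammer z n)"
    by (simp add: pochhammer_rec' norm_mult)
  also have "\<dots> \<le> (norm z + real n) * pochhammer (norm z) n"
  proof (rule mult_mono)
    show "norm (z + of_nat n) \<le> norm z + real n"
      using norm_triangle_ineq[of z "of_nat n"] by simp
  qed (use Suc in auto)
  also have "\<dots> = pochhammer (norm z) (Suc n)" by (simp add: pochhammer_rec')
  finally show ?case .
qed simp

lemma norm_poch_ge:
  assumes "Re (z::complex) > 0"
  shows "pochhammer (Re z) n \<le> norm (pochhammer z n)"
proof (induction n)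
  case (Suc n)
  have "pochhammer (Re z) (Suc n) = (Re z + real n) * pochhammer (Re z) n" by (simp add: pochhammer_rec')
  also have "\<dots> \<le> norm (z + of_nat n) * norm (pochhammer z n)"
  proof (rule mult_mono)
    show "Re z + real n \<le> norm (z + of_nat n)"
      using complex_Re_le_cmod[of "z + of_nat n"] by simp
  qed (use Suc assms in \<open>auto intro: pochhammer_nonneg\<close>)
  also have "\<dots> = norm (pochhammer z (Suc n))" by (simp add: pochhammer_rec' norm_mult)
  finally show ?case .
qed simp

lemma poch_mono_real:
  assumes "0 < u" "u \<le> (v::real)"
  shows "pochhammer u n \<le> pochhammer v n"
proof (induction n)
  case (Suc n)
  have "pochhammer u (Suc n) = (u + real n) * pochhammer u n" by (simp add: pochhammer_rec')
  also have "\<dots> \<le> (v + real n) * pochhammer v n"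
    using Suc assms by (intro mult_mono) (auto intro: pochhammer_nonneg)
  also have "\<dots> = pochhammer v (Suc n)" by (simp add: pochhammer_rec')
  finally show ?case .
qed simp


lemma hyp2F1_term_0 [simp]: "hyp2F1_term a b c 0 = 1"
  by (simp add: hyp2F1_term_def)

lemma hyp2F1_shift_limit:
  fixes a b c :: complex
  assumes c: "c \<notin> \<int>\<^sub>\<le>\<^sub>0" and s: "Re (c - a - b) > 0"
  shows "(\<lambda>m. hyp2F1_at1 a b (c + of_nat m)) \<longlonglongrightarrow> 1"
proof -
  define A where "A = norm a"
  define B where "B = norm b"
  have A0: "A \<ge> 0" and B0: "B \<ge> 0" by (simp_all add: A_def B_def)
  obtain m0 :: nat where m0: "A + B + 2 - Re c < real m0" using reals_Archimedean2 by blast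
  define x0 where "x0 = Re c + real m0"
  have x0: "x0 > A + B + 1" "x0 > 0" using m0 A0 B0 by (auto simp: x0_def)
  define g where "g n = pochhammer (A + 1) n * pochhammer (B + 1) n / (pochhammer (x0 + 1) n * fact n)" for n
  have g0: "g n \<ge> 0" for n using A0 B0 x0 unfolding g_def
    by (intro divide_nonneg_pos mult_nonneg_nonneg mult_pos_pos pochhammer_nonneg pochhammer_pos) auto
  have "summable (hyp2F1_term (of_real (A + 1)) (of_real (B + 1)) (of_real (x0 + 1)))"
    using x0 by (intro hyp2F1_summable Re_pos_not_nonpos_Int) auto
  moreover have "hyp2F1_term (of_real (A + 1)) (of_real (B + 1)) (of_real (x0 + 1)) = (\<lambda>n. of_real (g n))"
    by (rule ext) (simp only: hyp2F1_term_def g_def pochhammer_of_real of_real_mult of_real_divide of_real_fact)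
  ultimately have sg: "summable g" by (simp only: summable_complex_of_real)
  define G where "G = suminf g"
  have bound: "norm (hyp2F1_at1 a b (c + of_nat m) - 1) \<le> A * B / (Re c + real m) * G" if m: "m \<ge> m0" for m
  proof -
    define cm where "cm = c + of_nat m"
    define x where "x = Re c + real m"
    have xx0: "x \<ge> x0" using m by (simp add: x_def x0_def)
    hence xpos: "x > 0" using x0 by simp
    have Rcm: "Re cm = x" by (simp add: cm_def x_def)
    have scm: "summable (hyp2F1_term a b cm)"
      unfolding cm_def using s by (intro hyp2F1_summable nonpos_Ints_shift[OF c]) auto
    have tb: "norm (hyp2F1_term a b cm (Suc n)) \<le> A * B / x * g n" for n
    proof -
      have na: "norm (pochhammer a (Suc n)) \<le> A * pochhammer (A + 1) n"
        using norm_poch_le[of a "Suc n"] by (simp add: A_def pochhammer_rec)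
      have nb: "norm (pochhammer b (Suc n)) \<le> B * pochhammer (B + 1) n"
        using norm_poch_le[of b "Suc n"] by (simp add: B_def pochhammer_rec)
      have "x * pochhammer (x0 + 1) n \<le> x * pochhammer (x + 1) n"
        using xx0 x0 xpos by (intro mult_left_mono poch_mono_real) auto
      also have "\<dots> = pochhammer x (Suc n)" by (simp add: pochhammer_rec)
      also have "\<dots> \<le> norm (pochhammer cm (Suc n))"
        using norm_poch_ge[of cm "Suc n"] Rcm xpos by simp
      finally have nc: "x * pochhammer (x0 + 1) n \<le> norm (pochhammer cm (Suc n))" .
      have nf: "fact n \<le> (fact (Suc n) :: real)" by (rule fact_mono) simp
      have p1: "0 < pochhammer (x0 + 1) n" using x0 by (intro pochhammer_pos) simp
      have "norm (hyp2F1_term a b cm (Suc n)) =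
          norm (pochhammer a (Suc n)) * norm (pochhammer b (Suc n)) / (norm (pochhammer cm (Suc n)) * fact (Suc n))"
      proof -
        have nF: "norm (fact (Suc n) :: complex) = fact (Suc n)" by (metis norm_of_nat of_nat_fact)
        show ?thesis by (simp only: hyp2F1_term_def norm_mult norm_divide nF)
      qed
      also have "\<dots> \<le> (A * pochhammer (A + 1) n) * (B * pochhammer (B + 1) n) / ((x * pochhammer (x0 + 1) n) * fact n)"
      proof (rule frac_le)
        show "0 \<le> A * pochhammer (A + 1) n * (B * pochhammer (B + 1) n)"
          using A0 B0 by (intro mult_nonneg_nonneg pochhammer_nonneg) auto
        show "norm (pochhammer a (Suc n)) * norm (pochhammer b (Suc n)) \<le> A * pochhammer (A + 1) n * (B * pochhammer (B + 1) n)"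
          using na nb A0 by (intro mult_mono) (auto intro!: mult_nonneg_nonneg pochhammer_nonneg)
        show "0 < x * pochhammer (x0 + 1) n * fact n" using xpos p1 by simp
        show "x * pochhammer (x0 + 1) n * fact n \<le> norm (pochhammer cm (Suc n)) * fact (Suc n)"
          using nc nf xpos p1 by (intro mult_mono) auto
      qed
      also have "\<dots> = A * B / x * g n" by (simp add: g_def field_simps)
      finally show ?thesis .
    qed
    have eqs: "hyp2F1_at1 a b cm - 1 = (\<Sum>n. hyp2F1_term a b cm (Suc n))"
      unfolding hyp2F1_at1_def using suminf_split_head[OF scm] by simp
    have "norm (hyp2F1_at1 a b cm - 1) \<le> (\<Sum>n. A * B / x * g n)"
      unfolding eqs by (rule norm_suminf_le[OF tb summable_mult[OF sg]])
    also have "\<dots> = A * B / x * G" unfolding G_def by (rule suminf_mult[OF sg])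
    finally show ?thesis by (simp add: cm_def x_def)
  qed
  have "(\<lambda>m. A * B / (Re c + real m)) \<longlonglongrightarrow> 0"
    by (rule tendsto_divide_0[OF tendsto_const], rule filterlim_at_top_imp_at_infinity,
        rule filterlim_tendsto_add_at_top[OF tendsto_const filterlim_real_sequentially])
  hence "(\<lambda>m. A * B / (Re c + real m) * G) \<longlonglongrightarrow> 0 * G" by (rule tendsto_mult[OF _ tendsto_const])
  hence lim0: "(\<lambda>m. A * B / (Re c + real m) * G) \<longlonglongrightarrow> 0" by simp
  have ev: "eventually (\<lambda>m. norm (hyp2F1_at1 a b (c + of_nat m) - 1) \<le> A * B / (Re c + real m) * G) sequentially"
    using eventually_ge_at_top[of m0] by (rule eventually_mono) (rule bound)
  have "(\<lambda>m. hyp2F1_at1 a b (c + of_nat m) - 1) \<longlonglongrightarrow> 0"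
    by (rule Lim_null_comparison[OF ev lim0])
  thus ?thesis by (simp add: LIM_zero_iff)
qed

lemma gauss_2F1:
  fixes a b c :: complex
  assumes c: "c \<notin> \<int>\<^sub>\<le>\<^sub>0" and s: "Re (c - a - b) > 0"
  shows "hyp2F1_at1 a b c = Gamma c * Gamma (c - a - b) * rGamma (c - a) * rGamma (c - b)"
proof -
  have "(\<lambda>m. Rfac a b c m * hyp2F1_at1 a b (c + of_nat m)) \<longlonglongrightarrow>
      (Gamma c * Gamma (c - a - b) * rGamma (c - a) * rGamma (c - b)) * 1"
    by (intro tendsto_mult Rfac_limit hyp2F1_shift_limit c s)
  moreover have "(\<lambda>m. Rfac a b c m * hyp2F1_at1 a b (c + of_nat m)) = (\<lambda>m. hyp2F1_at1 a b c)"
    using hyp2F1_iter[OF c s] by simp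
  ultimately have "(\<lambda>m. hyp2F1_at1 a b c) \<longlonglongrightarrow> (Gamma c * Gamma (c - a - b) * rGamma (c - a) * rGamma (c - b)) * 1"
    by simp
  from LIMSEQ_unique[OF tendsto_const this] show ?thesis by simp
qed


lemma poch2:
  fixes w :: complex
  shows "pochhammer w (2 * k) = 4 ^ k * pochhammer (w / 2) k * pochhammer (w / 2 + 1 / 2) k"
proof -
  have "pochhammer (2 * (w / 2)) (2 * k) = of_nat (2 ^ (2 * k)) * pochhammer (w / 2) k * pochhammer (w / 2 + 1 / 2) k"
    by (rule pochhammer_double)
  moreover have "(of_nat (2 ^ (2 * k)) :: complex) = 4 ^ k" by (simp add: power_mult)
  ultimately show ?thesis by simp
qed

lemma Gamma_shift_nat:
  fixes z :: complex assumes "z \<notin> \<int>\<^sub>\<le>\<^sub>0"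
  shows "Gamma (z + of_nat N) = Gamma z * pochhammer z N"
  using pochhammer_Gamma[OF assms, of N] assms by (simp add: Gamma_eq_zero_iff field_simps)

lemma term_identity:
  fixes \<alpha> \<beta> \<gamma> \<epsilon> :: complex
  assumes eps: "\<epsilon> = \<alpha> + \<beta> - 1" and g: "Re \<gamma> > 1"
    and c0: "\<gamma> + \<epsilon> \<notin> \<int>\<^sub>\<le>\<^sub>0"
    and ga: "(\<gamma> + \<alpha>) / 2 \<notin> \<int>\<^sub>\<le>\<^sub>0" and gb: "(\<gamma> + \<beta>) / 2 \<notin> \<int>\<^sub>\<le>\<^sub>0"
  shows "pochhammer (\<epsilon> / 2) k * pochhammer ((\<gamma> + \<epsilon> - \<alpha>) / 2) k
                     * pochhammer ((\<gamma> + \<epsilon> - \<beta>) / 2) k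
                   / (fact k * pochhammer ((\<gamma> + \<epsilon>) / 2) k * pochhammer ((1 + \<gamma> + \<epsilon>) / 2) k)
         * hyp2F1_at1 \<alpha> \<beta> (\<gamma> + \<epsilon> + 2 * of_nat k)
       = Gamma (\<gamma> + \<epsilon>) * Gamma (\<gamma> - 1) * rGamma (\<gamma> + \<epsilon> - \<alpha>) * rGamma (\<gamma> - 1 + \<alpha>)
          * hyp3F2_term ((\<gamma> - 1) / 2) (\<gamma> / 2) (\<epsilon> / 2) ((\<gamma> + \<alpha>) / 2) ((\<gamma> + \<beta>) / 2) 1 k"
proof -
  define c0 where "c0 = \<gamma> + \<epsilon>"
  define N where "N = 2 * k"
  have ck: "c0 + 2 * of_nat k = c0 + of_nat N" by (simp add: N_def)
  have ckc: "c0 + of_nat N \<notin> \<int>\<^sub>\<le>\<^sub>0" using nonpos_Ints_shift[of c0 N] c0 by (simp add: c0_def)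
  have ckRe: "Re (c0 + of_nat N - \<alpha> - \<beta>) > 0" using g by (simp add: c0_def eps)
  have g1: "\<gamma> - 1 \<notin> \<int>\<^sub>\<le>\<^sub>0" using g by (intro Re_pos_not_nonpos_Int) simp
  have e1: "c0 + of_nat N - \<alpha> - \<beta> = (\<gamma> - 1) + of_nat N" by (simp add: c0_def eps)
  have e2: "c0 + of_nat N - \<alpha> = (c0 - \<alpha>) + of_nat N" by simp
  have e1': "c0 - \<alpha> + of_nat N - \<beta> = (\<gamma> - 1) + of_nat N" by (simp add: c0_def eps)
  have e3: "c0 + of_nat N - \<beta> = (\<gamma> - 1 + \<alpha>) + of_nat N" by (simp add: c0_def eps)
  have F: "hyp2F1_at1 \<alpha> \<beta> (c0 + of_nat N) =
      Gamma c0 * pochhammer c0 N * (Gamma (\<gamma> - 1) * pochhammer (\<gamma> - 1) N)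
      * rGamma ((c0 - \<alpha>) + of_nat N) * rGamma ((\<gamma> - 1 + \<alpha>) + of_nat N)"
    unfolding gauss_2F1[OF ckc ckRe] e1 e2 e1' e3 Gamma_shift_nat[OF c0[folded c0_def]] Gamma_shift_nat[OF g1]
    by simp
  have K: "Gamma c0 * Gamma (\<gamma> - 1) * rGamma (c0 - \<alpha>) * rGamma (\<gamma> - 1 + \<alpha>) =
      Gamma c0 * Gamma (\<gamma> - 1) * (pochhammer (c0 - \<alpha>) N * rGamma ((c0 - \<alpha>) + of_nat N))
      * (pochhammer (\<gamma> - 1 + \<alpha>) N * rGamma ((\<gamma> - 1 + \<alpha>) + of_nat N))"
    by (simp only: pochhammer_rGamma[symmetric])
  have d1: "pochhammer (c0 / 2) k \<noteq> 0"
  proof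
    assume "pochhammer (c0 / 2) k = 0"
    then obtain j where "c0 / 2 = - of_nat j" by (auto simp: pochhammer_eq_0_iff)
    hence "c0 = - of_nat (2 * j)" by (simp add: field_simps)
    moreover have "(- of_nat (2 * j) :: complex) \<in> \<int>\<^sub>\<le>\<^sub>0" by (rule minus_of_nat_in_nonpos_Ints)
    ultimately show False using c0 by (simp add: c0_def)
  qed
  have d2: "pochhammer (c0 / 2 + 1 / 2) k \<noteq> 0"
  proof
    assume "pochhammer (c0 / 2 + 1 / 2) k = 0"
    then obtain j where "c0 / 2 + 1 / 2 = - of_nat j" by (auto simp: pochhammer_eq_0_iff)
    moreover have "c0 = 2 * (c0 / 2 + 1 / 2) - 1" by simp
    ultimately have "c0 = 2 * (- of_nat j) - 1" by metis
    moreover have "(2 * (- of_nat j) - 1 :: complex) = - of_nat (2 * j + 1)" by simp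
    ultimately have "c0 = - of_nat (2 * j + 1)" by (rule trans)
    moreover have "(- of_nat (2 * j + 1) :: complex) \<in> \<int>\<^sub>\<le>\<^sub>0" by (rule minus_of_nat_in_nonpos_Ints)
    ultimately show False using c0 by (simp add: c0_def)
  qed
  have z1: "pochhammer ((\<gamma> + \<alpha>) / 2) k \<noteq> 0" using ga by (auto simp: pochhammer_eq_0_iff)
  have z2: "pochhammer ((\<gamma> + \<beta>) / 2) k \<noteq> 0" using gb by (auto simp: pochhammer_eq_0_iff)
  have f0: "(fact k :: complex) \<noteq> 0" by simp
  have a1: "(c0 - \<alpha>) / 2 + 1 / 2 = (\<gamma> + \<beta>) / 2" by (simp add: c0_def eps field_simps)
  have a2: "(\<gamma> - 1 + \<alpha>) / 2 + 1 / 2 = (\<gamma> + \<alpha>) / 2" by (simp add: field_simps)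
  have a3: "(\<gamma> - 1) / 2 + 1 / 2 = \<gamma> / 2" by (simp add: field_simps)
  have a4: "(1 + \<gamma> + \<epsilon>) / 2 = c0 / 2 + 1 / 2" by (simp add: c0_def field_simps)
  have a5: "(c0 - \<beta>) / 2 = (\<gamma> - 1 + \<alpha>) / 2" by (simp add: c0_def eps field_simps)
  show ?thesis
    unfolding c0_def[symmetric] ck F K unfolding hyp3F2_term_def N_def poch2 a1 a2 a3 a4 a5
    using d1 d2 z1 z2 f0 by (simp add: field_simps)
qed


lemma hyp3F2_summable:
  fixes a1 a2 a3 b1 b2 :: complex
  assumes b1: "b1 \<notin> \<int>\<^sub>\<le>\<^sub>0" and b2: "b2 \<notin> \<int>\<^sub>\<le>\<^sub>0"
    and s: "Re (b1 + b2 - a1 - a2 - a3) > 0"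
  shows "summable (hyp3F2_term a1 a2 a3 b1 b2 1)"
proof -
  have one: "(1::complex) \<notin> \<int>\<^sub>\<le>\<^sub>0" by simp
  obtain C1 where C1: "eventually (\<lambda>n. norm (pochhammer a1 (Suc n) / pochhammer b1 (Suc n)) \<le> C1 * real n powr (Re a1 - Re b1)) sequentially"
    using poch_ratio_bound[OF b1] by blast
  obtain C2 where C2: "eventually (\<lambda>n. norm (pochhammer a2 (Suc n) / pochhammer b2 (Suc n)) \<le> C2 * real n powr (Re a2 - Re b2)) sequentially"
    using poch_ratio_bound[OF b2] by blast
  obtain C3 where C3: "eventually (\<lambda>n. norm (pochhammer a3 (Suc n) / pochhammer 1 (Suc n)) \<le> C3 * real n powr (Re a3 - Re 1)) sequentially"
    using poch_ratio_bound[OF one] by blast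
  have ev: "eventually (\<lambda>n. norm (pochhammer a1 (Suc n) / pochhammer b1 (Suc n) * (pochhammer a2 (Suc n) / pochhammer b2 (Suc n))
      * (pochhammer a3 (Suc n) / pochhammer 1 (Suc n))) \<le> (C1 * C2 * C3) * real n powr ((Re a1 - Re b1) + (Re a2 - Re b2) + (Re a3 - Re 1))) sequentially"
    by (rule prod_bound_ev[OF prod_bound_ev[OF C1 C2] C3])
  have eq: "hyp3F2_term a1 a2 a3 b1 b2 1 (Suc n) = pochhammer a1 (Suc n) / pochhammer b1 (Suc n) * (pochhammer a2 (Suc n) / pochhammer b2 (Suc n))
      * (pochhammer a3 (Suc n) / pochhammer 1 (Suc n))" for n
    by (simp add: hyp3F2_term_def pochhammer_fact)
  have "summable (\<lambda>n. (C1 * C2 * C3) * real n powr ((Re a1 - Re b1) + (Re a2 - Re b2) + (Re a3 - Re 1)))"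
    using s by (intro summable_mult) (simp add: summable_real_powr_iff)
  hence "summable (\<lambda>n. hyp3F2_term a1 a2 a3 b1 b2 1 (Suc n))"
    unfolding eq by (rule summable_comparison_test_ev[OF ev])
  thus ?thesis by (simp add: summable_Suc_iff)
qed

theorem mainTheorem6:
  fixes \<alpha> \<beta> \<gamma> \<delta> \<epsilon> :: complex
  assumes "\<gamma> + \<delta> = 2"
    and "1 + \<alpha> + \<beta> = \<gamma> + \<delta> + \<epsilon>"
    and "\<alpha> * \<beta> \<noteq> 0"
    and "\<gamma> + \<epsilon> \<notin> \<int>\<^sub>\<le>\<^sub>0"
    and "Re \<gamma> > 1"
    and "(\<gamma> + \<alpha>) / 2 \<notin> \<int>\<^sub>\<le>\<^sub>0"
    and "(\<gamma> + \<beta>) / 2 \<notin> \<int>\<^sub>\<le>\<^sub>0"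
  defines "a \<equiv> (\<lambda>k::nat. pochhammer (\<epsilon> / 2) k * pochhammer ((\<gamma> + \<epsilon> - \<alpha>) / 2) k
                     * pochhammer ((\<gamma> + \<epsilon> - \<beta>) / 2) k
                   / (fact k * pochhammer ((\<gamma> + \<epsilon>) / 2) k * pochhammer ((1 + \<gamma> + \<epsilon>) / 2) k))"
  shows "(\<forall>k. summable (hyp2F1_term \<alpha> \<beta> (\<gamma> + \<epsilon> + 2 * of_nat k)))
    \<and> summable (\<lambda>k. a k * hyp2F1_at1 \<alpha> \<beta> (\<gamma> + \<epsilon> + 2 * of_nat k))
    \<and> (\<Sum>k. a k * hyp2F1_at1 \<alpha> \<beta> (\<gamma> + \<epsilon> + 2 * of_nat k))
        = Gamma (\<gamma> + \<epsilon>) * Gamma (\<gamma> - 1) * rGamma (\<gamma> + \<epsilon> - \<alpha>) * rGamma (\<gamma> - 1 + \<alpha>)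
          * hyp3F2 ((\<gamma> - 1) / 2) (\<gamma> / 2) (\<epsilon> / 2) ((\<gamma> + \<alpha>) / 2) ((\<gamma> + \<beta>) / 2) 1"
proof -
  have eps: "\<epsilon> = \<alpha> + \<beta> - 1" using assms(1,2) by (simp add: algebra_simps)
  define K where "K = Gamma (\<gamma> + \<epsilon>) * Gamma (\<gamma> - 1) * rGamma (\<gamma> + \<epsilon> - \<alpha>) * rGamma (\<gamma> - 1 + \<alpha>)"
  define T where "T = hyp3F2_term ((\<gamma> - 1) / 2) (\<gamma> / 2) (\<epsilon> / 2) ((\<gamma> + \<alpha>) / 2) ((\<gamma> + \<beta>) / 2) 1"
  have P1: "\<forall>k. summable (hyp2F1_term \<alpha> \<beta> (\<gamma> + \<epsilon> + 2 * of_nat k))"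
  proof
    fix k
    have e: "\<gamma> + \<epsilon> + 2 * of_nat k = (\<gamma> + \<epsilon>) + of_nat (2 * k)" by simp
    show "summable (hyp2F1_term \<alpha> \<beta> (\<gamma> + \<epsilon> + 2 * of_nat k))"
      unfolding e using assms(5) by (intro hyp2F1_summable nonpos_Ints_shift assms(4)) (simp add: eps)
  qed
  have sT: "summable T" unfolding T_def
    using assms(6,7) by (intro hyp3F2_summable) (auto simp: eps field_simps)
  have id: "a k * hyp2F1_at1 \<alpha> \<beta> (\<gamma> + \<epsilon> + 2 * of_nat k) = K * T k" for k
    unfolding a_def K_def T_def by (rule term_identity[OF eps assms(5,4,6,7)])
  have S: "(\<lambda>k. a k * hyp2F1_at1 \<alpha> \<beta> (\<gamma> + \<epsilon> + 2 * of_nat k)) = (\<lambda>k. K * T k)"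
    using id by (rule ext)
  show ?thesis
    unfolding S using P1 sT
    by (simp add: summable_mult suminf_mult K_def T_def hyp3F2_def)
qed

end
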